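(* Let $(A,G)$ be an admissible pair with $A\in M_{Q_0}(\mathbb Z)$, and assume that $G$ has exactly two orbits in $Q_0$. Then $(A,G)$ is a stable admissible pair.
   Context: $Q_0$ finite; $A=(a_{ij})$ skew-symmetrizable ($DA$ skew-symmetric for a positive integer diagonal $D$). Mutation $\mu_k(B)=(b'_{ij})$: $b'_{ij}=-b_{ij}$ if $k\in\{i,j\}$, else $b_{ij}+\tfrac12(|b_{ik}|b_{kj}+b_{ik}|b_{kj}|)$. A permutation $g$ of $Q_0$ is an automorphism of $B$ if $b_{gi,gj}=b_{ij}$; a group $G$ of automorphisms of $B$ is admissible ($(B,G)$ an admissible pair) if for distinct $i,j$ in the same $G$-orbit there is no path of length $1$ or $2$ from $i$ to $j$ in the quiver of $B$ ($b_{ij}\le0$ and no $k$ with $b_{ik}>0$, $b_{kj}>0$). For a $G$-orbit $\mathbf i$, $\mu^G_{\mathbf i}=\prod_{j\in\mathbf i}\mu_j$. $(A,G)$ is stable if for every finite sequence of $G$-orbits $\mathbf i_1,\ldots,\mathbf i_n$, each pair $(\mu^G_{\mathbf i_m}\circ\cdots\circ\mu^G_{\mathbf i_1}(A),G)$, $1\le m\le n$, is admissible. *)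

theory Defs
  imports "HOL-Combinatorics.Permutations"
begin

text \<open>Exchange matrices indexed by a finite vertex set Q0 are functions
  'a => 'a => int; only the entries with indices in Q0 are relevant.\<close>

definition skew_symmetrizable :: "'a set \<Rightarrow> ('a \<Rightarrow> 'a \<Rightarrow> int) \<Rightarrow> bool" where
  "skew_symmetrizable Q0 A \<longleftrightarrow>
     (\<exists>D :: 'a \<Rightarrow> int. (\<forall>i\<in>Q0. D i > 0) \<and>
        (\<forall>i\<in>Q0. \<forall>j\<in>Q0. D i * A i j = - (D j * A j i)))"

definition mutation :: "'a \<Rightarrow> ('a \<Rightarrow> 'a \<Rightarrow> int) \<Rightarrow> ('a \<Rightarrow> 'a \<Rightarrow> int)" where
  "mutation k B = (\<lambda>i j. if i = k \<or> j = k then - B i j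
      else B i j + (\<bar>B i k\<bar> * B k j + B i k * \<bar>B k j\<bar>) div 2)"

definition is_automorphism :: "'a set \<Rightarrow> ('a \<Rightarrow> 'a \<Rightarrow> int) \<Rightarrow> ('a \<Rightarrow> 'a) \<Rightarrow> bool" where
  "is_automorphism Q0 B g \<longleftrightarrow> g permutes Q0 \<and> (\<forall>i\<in>Q0. \<forall>j\<in>Q0. B (g i) (g j) = B i j)"

definition perm_group_on :: "'a set \<Rightarrow> ('a \<Rightarrow> 'a) set \<Rightarrow> bool" where
  "perm_group_on Q0 G \<longleftrightarrow> id \<in> G \<and> (\<forall>g\<in>G. g permutes Q0) \<and>
     (\<forall>g\<in>G. \<forall>h\<in>G. g \<circ> h \<in> G) \<and> (\<forall>g\<in>G. inv g \<in> G)"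

definition automorphism_group :: "'a set \<Rightarrow> ('a \<Rightarrow> 'a \<Rightarrow> int) \<Rightarrow> ('a \<Rightarrow> 'a) set \<Rightarrow> bool" where
  "automorphism_group Q0 B G \<longleftrightarrow> perm_group_on Q0 G \<and> (\<forall>g\<in>G. is_automorphism Q0 B g)"

definition orbit :: "('a \<Rightarrow> 'a) set \<Rightarrow> 'a \<Rightarrow> 'a set" where
  "orbit G i = (\<lambda>g. g i) ` G"

definition orbits :: "'a set \<Rightarrow> ('a \<Rightarrow> 'a) set \<Rightarrow> 'a set set" where
  "orbits Q0 G = orbit G ` Q0"

definition admissible :: "'a set \<Rightarrow> ('a \<Rightarrow> 'a \<Rightarrow> int) \<Rightarrow> ('a \<Rightarrow> 'a) set \<Rightarrow> bool" where
  "admissible Q0 B G \<longleftrightarrow> automorphism_group Q0 B G \<and>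
     (\<forall>i\<in>Q0. \<forall>j\<in>Q0. i \<noteq> j \<and> j \<in> orbit G i \<longrightarrow>
         B i j \<le> 0 \<and> \<not> (\<exists>k\<in>Q0. B i k > 0 \<and> B k j > 0))"

text \<open>Orbit mutation: the product of the mutations at the vertices of the orbit,
  taken in some fixed enumeration of the orbit (for admissible pairs these
  mutations commute, so the choice is irrelevant).\<close>
definition orbit_mutation :: "'a set \<Rightarrow> ('a \<Rightarrow> 'a \<Rightarrow> int) \<Rightarrow> ('a \<Rightarrow> 'a \<Rightarrow> int)" where
  "orbit_mutation I B = foldr mutation (SOME xs. distinct xs \<and> set xs = I) B"

definition orbit_mutations :: "'a set list \<Rightarrow> ('a \<Rightarrow> 'a \<Rightarrow> int) \<Rightarrow> ('a \<Rightarrow> 'a \<Rightarrow> int)" where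
  "orbit_mutations Is B = fold orbit_mutation Is B"

definition stable_pair :: "'a set \<Rightarrow> ('a \<Rightarrow> 'a \<Rightarrow> int) \<Rightarrow> ('a \<Rightarrow> 'a) set \<Rightarrow> bool" where
  "stable_pair Q0 A G \<longleftrightarrow>
     (\<forall>Is. set Is \<subseteq> orbits Q0 G \<longrightarrow>
        (\<forall>m. 1 \<le> m \<and> m \<le> length Is \<longrightarrow> admissible Q0 (orbit_mutations (take m Is) A) G))"

end

theory Submission
  imports Defs
begin

lemma term_zero:
  fixes a b :: int
  assumes "a * b \<le> 0"
  shows "(\<bar>a\<bar> * b + a * \<bar>b\<bar>) div 2 = 0"
proof -
  have "\<bar>a\<bar> * b + a * \<bar>b\<bar> = 0"
  proof (cases "a \<ge> 0")
    case True
    then show ?thesis using assms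
      by (cases "b \<ge> 0") (auto simp: abs_if mult_le_0_iff)
  next
    case False
    then show ?thesis using assms
      by (cases "b \<ge> 0") (auto simp: abs_if mult_le_0_iff)
  qed
  then show ?thesis by simp
qed

lemma foldr_mut:
  assumes "set xs \<subseteq> Orb" "Orb \<subseteq> Q0" "distinct xs"
    "\<forall>i\<in>Orb. \<forall>j\<in>Orb. B i j = 0"
    "\<forall>i\<in>Q0. \<forall>j\<in>Q0. \<forall>k\<in>Orb. B i k * B k j \<le> 0"
  shows "\<forall>i\<in>Q0. \<forall>j\<in>Q0. foldr mutation xs B i j =
           (if i \<in> set xs \<or> j \<in> set xs then - B i j else B i j)"
  using assms(1,3)
proof (induction xs)
  case Nil
  then show ?case by simp
next
  case (Cons x xs)
  let ?C = "foldr mutation xs B"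
  have IH: "\<forall>i\<in>Q0. \<forall>j\<in>Q0. ?C i j =
           (if i \<in> set xs \<or> j \<in> set xs then - B i j else B i j)"
    using Cons by auto
  have xO: "x \<in> Orb" and xQ: "x \<in> Q0" and xn: "x \<notin> set xs"
    using Cons assms(2) by auto
  show ?case
  proof (intro ballI)
    fix i j assume i: "i \<in> Q0" and j: "j \<in> Q0"
    have Cix: "?C i x = B i x"
      using IH i xQ xn assms(4) Cons.prems(1) xO by auto
    have Cxj: "?C x j = B x j"
      using IH j xQ xn assms(4) Cons.prems(1) xO by auto
    have Cij: "?C i j = (if i \<in> set xs \<or> j \<in> set xs then - B i j else B i j)"
      using IH i j by auto
    have Cxj': "?C x j = (if j \<in> set xs then - B x j else B x j)"
      using IH j xQ xn by auto
    have Cix': "?C i x = (if i \<in> set xs then - B i x else B i x)"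
      using IH i xQ xn by auto
    have prod: "B i x * B x j \<le> 0" using assms(5) i j xO by auto
    show "foldr mutation (x # xs) B i j =
           (if i \<in> set (x # xs) \<or> j \<in> set (x # xs) then - B i j else B i j)"
    proof (cases "i = x \<or> j = x")
      case True
      then show ?thesis
      proof
        assume "i = x"
        then show ?thesis using Cxj' Cxj by (simp add: mutation_def)
      next
        assume "j = x"
        then show ?thesis using Cix' Cix by (simp add: mutation_def)
      qed
    next
      case False
      then show ?thesis using Cij Cix Cxj term_zero[OF prod]
        by (simp add: mutation_def)
    qed
  qed
qed

definition good :: "'a set \<Rightarrow> ('a \<Rightarrow> 'a) set \<Rightarrow> ('a \<Rightarrow> 'a \<Rightarrow> int) \<Rightarrow> bool" where
  "good Q0 G B \<longleftrightarrow> automorphism_group Q0 B G \<and>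
     (\<forall>i\<in>Q0. \<forall>j\<in>Q0. j \<in> orbit G i \<longrightarrow> B i j = 0 \<and>
        (\<forall>k\<in>Q0. B i k * B k j \<le> 0))"

lemma good_admissible: "good Q0 G B \<Longrightarrow> admissible Q0 B G"
  unfolding good_def admissible_def
  by (metis mult_pos_pos not_le order_refl)

lemma good_neg: "good Q0 G B \<Longrightarrow> good Q0 G (\<lambda>i j. - B i j)"
  unfolding good_def automorphism_group_def is_automorphism_def
  by auto

lemma good_agree: "good Q0 G B \<Longrightarrow> \<forall>i\<in>Q0. \<forall>j\<in>Q0. C i j = B i j \<Longrightarrow> good Q0 G C"
  unfolding good_def automorphism_group_def is_automorphism_def
  by (auto simp: permutes_in_image)


lemma orbit_sub: assumes "perm_group_on Q0 G" "i \<in> Q0" shows "orbit G i \<subseteq> Q0"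
proof
  fix x assume "x \<in> orbit G i"
  then obtain g where g: "g \<in> G" "x = g i" unfolding orbit_def by auto
  then have "g permutes Q0" using assms(1) unfolding perm_group_on_def by blast
  then show "x \<in> Q0" using g(2) assms(2) permutes_in_image by metis
qed

lemma orbit_self: assumes "perm_group_on Q0 G" shows "i \<in> orbit G i"
proof -
  have "id \<in> G" using assms unfolding perm_group_on_def by blast
  then have "id i \<in> (\<lambda>g. g i) ` G" by (rule imageI)
  then show ?thesis unfolding orbit_def by simp
qed

lemma orbit_sym: assumes "perm_group_on Q0 G" "j \<in> orbit G i" shows "i \<in> orbit G j"
proof -
  obtain g where g: "g \<in> G" "j = g i" using assms(2) unfolding orbit_def by auto
  have "inv g \<in> G" using assms(1) g unfolding perm_group_on_def by auto
  moreover have "inv g j = i" using g assms(1) unfolding perm_group_on_def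
    by (metis permutes_inverses(2))
  ultimately show ?thesis unfolding orbit_def by force
qed

lemma orbit_trans: assumes "perm_group_on Q0 G" "j \<in> orbit G i" "k \<in> orbit G j"
  shows "k \<in> orbit G i"
proof -
  obtain g where g: "g \<in> G" "j = g i" using assms(2) unfolding orbit_def by auto
  obtain h where h: "h \<in> G" "k = h j" using assms(3) unfolding orbit_def by auto
  have "h \<circ> g \<in> G" using assms(1) g h unfolding perm_group_on_def by auto
  then have "(h \<circ> g) i \<in> (\<lambda>g. g i) ` G" by (rule imageI)
  then show ?thesis using g h unfolding orbit_def by simp
qed

lemma two_orbits:
  assumes "perm_group_on Q0 G" "finite Q0" "card (orbits Q0 G) = 2" "Orb \<in> orbits Q0 G"
    "i \<in> Q0" "j \<in> Q0" "i \<notin> Orb" "j \<notin> Orb"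
  shows "j \<in> orbit G i"
proof -
  obtain O2 where o: "orbits Q0 G = {Orb, O2}"
  proof -
    obtain x y where xy: "orbits Q0 G = {x, y}" using assms(3) by (auto simp: card_2_iff)
    show ?thesis
    proof (cases "Orb = x")
      case True then show ?thesis using xy that by auto
    next
      case False then have "Orb = y" using xy assms(4) by auto
      then show ?thesis using xy that by (auto simp: insert_commute)
    qed
  qed
  have "orbit G i \<in> orbits Q0 G" "orbit G j \<in> orbits Q0 G"
    using assms(5,6) unfolding orbits_def by auto
  moreover have "orbit G i \<noteq> Orb" "orbit G j \<noteq> Orb"
    using orbit_self[OF assms(1)] assms(7,8) by auto
  ultimately have "orbit G i = orbit G j" using o by auto
  then show ?thesis using orbit_self[OF assms(1)] by auto
qed

lemma orbit_mut_neg: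
  assumes "good Q0 G B" "finite Q0" "card (orbits Q0 G) = 2" "Orb \<in> orbits Q0 G"
  shows "\<forall>i\<in>Q0. \<forall>j\<in>Q0. orbit_mutation Orb B i j = - B i j"
proof -
  have pg: "perm_group_on Q0 G" using assms(1) unfolding good_def automorphism_group_def by auto
  obtain i0 where i0: "i0 \<in> Q0" "Orb = orbit G i0" using assms(4) unfolding orbits_def by auto
  have sub: "Orb \<subseteq> Q0" using orbit_sub[OF pg i0(1)] i0 by auto
  have same: "j \<in> orbit G i" if "i \<in> Orb" "j \<in> Orb" for i j
    using orbit_trans[OF pg orbit_sym[OF pg] ] that i0 by blast
  have gB: "\<And>i j. i \<in> Q0 \<Longrightarrow> j \<in> Q0 \<Longrightarrow> j \<in> orbit G i \<Longrightarrow> B i j = 0 \<and> (\<forall>k\<in>Q0. B i k * B k j \<le> 0)"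
    using assms(1) unfolding good_def by auto
  have h4: "\<forall>i\<in>Orb. \<forall>j\<in>Orb. B i j = 0" using gB same sub by blast
  have h5: "\<forall>i\<in>Q0. \<forall>j\<in>Q0. \<forall>k\<in>Orb. B i k * B k j \<le> 0"
  proof (intro ballI)
    fix i j k assume i: "i \<in> Q0" and j: "j \<in> Q0" and k: "k \<in> Orb"
    show "B i k * B k j \<le> 0"
    proof (cases "i \<in> Orb \<or> j \<in> Orb")
      case True
      then show ?thesis using h4 k by auto
    next
      case False
      then have "j \<in> orbit G i" using two_orbits[OF pg assms(2,3,4) i j] by auto
      then show ?thesis using gB i j k sub by auto
    qed
  qed
  have "finite Orb" using sub assms(2) finite_subset by auto
  then obtain ys where "distinct ys \<and> set ys = Orb" using finite_distinct_list by blast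
  then have xs: "distinct (SOME xs. distinct xs \<and> set xs = Orb) \<and> set (SOME xs. distinct xs \<and> set xs = Orb) = Orb"
    by (rule someI)
  have F: "\<forall>i\<in>Q0. \<forall>j\<in>Q0. orbit_mutation Orb B i j =
           (if i \<in> Orb \<or> j \<in> Orb then - B i j else B i j)"
    using foldr_mut[of _ Orb Q0 B] xs sub h4 h5 unfolding orbit_mutation_def by auto
  show ?thesis
  proof (intro ballI)
    fix i j assume i: "i \<in> Q0" and j: "j \<in> Q0"
    show "orbit_mutation Orb B i j = - B i j"
    proof (cases "i \<in> Orb \<or> j \<in> Orb")
      case True then show ?thesis using F i j by auto
    next
      case False
      then have "j \<in> orbit G i" using two_orbits[OF pg assms(2,3,4) i j] by auto
      then show ?thesis using F gB i j False by auto
    qed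
  qed
qed

lemma good_mutations:
  assumes "finite Q0" "card (orbits Q0 G) = 2"
  shows "good Q0 G B \<Longrightarrow> set Is \<subseteq> orbits Q0 G \<Longrightarrow> good Q0 G (orbit_mutations Is B)"
proof (induction Is arbitrary: B)
  case Nil
  then show ?case by (simp add: orbit_mutations_def)
next
  case (Cons I Is)
  have "good Q0 G (orbit_mutation I B)"
    using good_agree[OF good_neg[OF Cons.prems(1)] orbit_mut_neg[OF Cons.prems(1) assms]] Cons.prems(2)
    by auto
  then have "good Q0 G (orbit_mutations Is (orbit_mutation I B))" using Cons by auto
  then show ?case by (simp add: orbit_mutations_def)
qed

lemma good_A:
  assumes "skew_symmetrizable Q0 A" "admissible Q0 A G"
  shows "good Q0 G A"
proof -
  obtain D :: "'a \<Rightarrow> int" where D: "\<forall>i\<in>Q0. D i > 0" "\<forall>i\<in>Q0. \<forall>j\<in>Q0. D i * A i j = - (D j * A j i)"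
    using assms(1) unfolding skew_symmetrizable_def by auto
  have pg: "perm_group_on Q0 G" using assms(2) unfolding admissible_def automorphism_group_def by auto
  have adm: "\<And>i j. i \<in> Q0 \<Longrightarrow> j \<in> Q0 \<Longrightarrow> i \<noteq> j \<Longrightarrow> j \<in> orbit G i \<Longrightarrow>
         A i j \<le> 0 \<and> \<not> (\<exists>k\<in>Q0. A i k > 0 \<and> A k j > 0)"
    using assms(2) unfolding admissible_def by auto
  have sgn1: "A j i < 0" if "i \<in> Q0" "j \<in> Q0" "A i j > 0" for i j
  proof -
    have "D i * A i j > 0" using D(1) that by auto
    then have "D j * A j i < 0" using D(2) that by (metis neg_less_0_iff_less)
    moreover have "D j > 0" using D(1) that by auto
    ultimately show ?thesis by (simp add: mult_less_0_iff)
  qed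
  have sgn2: "A j i > 0" if "i \<in> Q0" "j \<in> Q0" "A i j < 0" for i j
  proof -
    have "D i * A i j < 0" using D(1) that by (simp add: mult_pos_neg)
    then have "D j * A j i > 0" using D(2) that by (metis neg_0_less_iff_less)
    moreover have "D j > 0" using D(1) that by auto
    ultimately show ?thesis by (simp add: zero_less_mult_iff)
  qed
  have diag: "A i i = 0" if "i \<in> Q0" for i
    using sgn1[OF that that] sgn2[OF that that] by (cases "A i i > 0"; cases "A i i < 0") auto
  show ?thesis unfolding good_def
  proof (intro conjI ballI impI)
    show "automorphism_group Q0 A G" using assms(2) unfolding admissible_def by auto
  next
    fix i j assume i: "i \<in> Q0" and j: "j \<in> Q0" and o: "j \<in> orbit G i"
    have oi: "i \<in> orbit G j" using orbit_sym[OF pg o] .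
    show "A i j = 0"
    proof (cases "i = j")
      case True then show ?thesis using diag i by auto
    next
      case False
      then have "A i j \<le> 0" "A j i \<le> 0" using adm i j o oi by auto
      then show ?thesis using sgn2 i j by force
    qed
  next
    fix i j k assume i: "i \<in> Q0" and j: "j \<in> Q0" and o: "j \<in> orbit G i" and k: "k \<in> Q0"
    have oi: "i \<in> orbit G j" using orbit_sym[OF pg o] .
    show "A i k * A k j \<le> 0"
    proof (rule ccontr)
      assume "\<not> A i k * A k j \<le> 0"
      then have p: "A i k * A k j > 0" by simp
      show False
      proof (cases "i = j")
        case True
        then have p2: "A i k * A k i > 0" using p by simp
        then have "(A i k > 0 \<and> A k i > 0) \<or> (A i k < 0 \<and> A k i < 0)"
          by (simp add: zero_less_mult_iff)
        then show False using sgn1[OF i k] sgn2[OF i k] by auto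
      next
        case False
        show False
        proof (cases "A i k > 0")
          case True
          then have "A k j > 0" using p by (simp add: zero_less_mult_iff)
          then show False using adm[OF i j False o] k True by auto
        next
          case nt: False
          then have "A i k < 0" "A k j < 0" using p by (auto simp: zero_less_mult_iff)
          then have "A k i > 0" "A j k > 0" using sgn2 i j k by auto
          then show False using adm[OF j i _ oi] False k by auto
        qed
      qed
    qed
  qed
qed

theorem mainTheorem13:
  fixes Q0 :: "'a set" and A :: "'a \<Rightarrow> 'a \<Rightarrow> int" and G :: "('a \<Rightarrow> 'a) set"
  assumes "finite Q0"
    and "skew_symmetrizable Q0 A"
    and "admissible Q0 A G"
    and "card (orbits Q0 G) = 2"
  shows "admissible Q0 A G \<and> stable_pair Q0 A G"
proof -
  have g: "good Q0 G A" using good_A assms(2,3) by blast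
  show ?thesis
    unfolding stable_pair_def
  proof (intro conjI allI impI)
    fix Is :: "'a set list" and m :: nat
    assume "set Is \<subseteq> orbits Q0 G"
    then have "set (take m Is) \<subseteq> orbits Q0 G" by (meson order_trans set_take_subset)
    then show "admissible Q0 (orbit_mutations (take m Is) A) G"
      using good_admissible good_mutations[OF assms(1,4) g] by blast
  qed (rule assms(3))
qed

end
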